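(* Let $$\Sigma_1=\begin{pmatrix}-1&-1&1&1\\1&1&1&1\\1&1&1&1\\1&1&1&1\end{pmatrix},\quad \Sigma_2=\begin{pmatrix}-1&-1&1&1\\1&-1&-1&1\\1&1&1&1\\1&1&1&1\end{pmatrix},\quad \Sigma_3=\begin{pmatrix}-1&-1&1&1\\1&-1&1&1\\1&1&-1&1\\1&1&1&1\end{pmatrix}.$$ Then every $4\times4$ matrix with entries $\pm1$ and vanishing permanent is equivalent to exactly one of $\Sigma_1,\Sigma_1^{t},\Sigma_2,\Sigma_2^{t},\Sigma_3$, and these five matrices (which all have vanishing permanent) are pairwise inequivalent. That is, up to equivalence there are exactly five $4\times4$ $(\pm1)$-matrices with vanishing permanent.
   Context: The permanent of $\Sigma=[\sigma_{ij}]$ is $\sum_{\lambda\in\mathrm{Sym}(4)}\sigma_{1,\lambda(1)}\cdots\sigma_{4,\lambda(4)}$; $\Sigma^t$ is the transpose. Two matrices with entries $\pm1$ are equivalent if one is obtained from the other by a finite succession of the operations: interchanging two rows or two columns; negating a row or a column (transposition is not an allowed operation). *)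

theory Defs
  imports "HOL-Analysis.Analysis" "HOL-Combinatorics.Permutations"
begin

type_synonym pmmat = "int ^ 4 ^ 4"

definition pm_matrix :: "pmmat \<Rightarrow> bool" where
  "pm_matrix A \<longleftrightarrow> (\<forall>i j. A $ i $ j = 1 \<or> A $ i $ j = -1)"

definition permanent :: "pmmat \<Rightarrow> int" where
  "permanent A = (\<Sum>p | p permutes (UNIV :: 4 set). \<Prod>i\<in>UNIV. A $ i $ p i)"

inductive pm_step :: "pmmat \<Rightarrow> pmmat \<Rightarrow> bool" where
  swap_rows: "pm_step A (\<chi> r c. A $ (Transposition.transpose i j r) $ c)"
| swap_cols: "pm_step A (\<chi> r c. A $ r $ (Transposition.transpose i j c))"
| neg_row: "pm_step A (\<chi> r c. if r = i then - (A $ r $ c) else A $ r $ c)"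
| neg_col: "pm_step A (\<chi> r c. if c = j then - (A $ r $ c) else A $ r $ c)"

definition pm_equiv :: "pmmat \<Rightarrow> pmmat \<Rightarrow> bool" where
  "pm_equiv A B \<longleftrightarrow> pm_step\<^sup>*\<^sup>* A B"

text \<open>Row/column index of type 4 as 0..3 (rows numbered 1,2,3,4 = 1,2,3,0 in type 4).\<close>
definition idx4 :: "4 \<Rightarrow> nat" where
  "idx4 i = (if i = 1 then 0 else if i = 2 then 1 else if i = 3 then 2 else 3)"

definition mat_of_rows :: "int list list \<Rightarrow> pmmat" where
  "mat_of_rows xss = (\<chi> i j. xss ! idx4 i ! idx4 j)"

definition Sigma1 :: pmmat where
  "Sigma1 = mat_of_rows [[-1,-1,1,1],[1,1,1,1],[1,1,1,1],[1,1,1,1]]"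

definition Sigma2 :: pmmat where
  "Sigma2 = mat_of_rows [[-1,-1,1,1],[1,-1,-1,1],[1,1,1,1],[1,1,1,1]]"

definition Sigma3 :: pmmat where
  "Sigma3 = mat_of_rows [[-1,-1,1,1],[1,-1,1,1],[1,1,-1,1],[1,1,1,1]]"

end

theory Submission
  imports Defs
begin


definition ix :: "nat \<Rightarrow> 4" where
  "ix n = (if n = 0 then 1 else if n = 1 then 2 else if n = 2 then 3 else 4)"

lemma idx4_ix: "n < 4 \<Longrightarrow> idx4 (ix n) = n"
  by (auto simp: ix_def idx4_def)

lemma ix_idx4: "ix (idx4 i) = i"
  using exhaust_4[of i] by (auto simp: ix_def idx4_def)

lemma idx4_lt: "idx4 i < 4"
  by (simp add: idx4_def)

lemma idx4_inj: "idx4 i = idx4 j \<longleftrightarrow> i = j"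
  by (metis ix_idx4)

lemma idx4_eq: "n < 4 \<Longrightarrow> idx4 r = n \<longleftrightarrow> r = ix n"
  by (metis idx4_ix ix_idx4)

lemma sum4: "sum f (UNIV::4 set) = f (ix 0) + f (ix 1) + f (ix 2) + f (ix 3)"
  by (simp add: sum_4 ix_def)

lemma prod4: "prod f (UNIV::4 set) = f (ix 0) * f (ix 1) * f (ix 2) * f (ix 3)"
  unfolding UNIV_4 by (simp add: ix_def ac_simps)

lemma mor_ix: "a < 4 \<Longrightarrow> b < 4 \<Longrightarrow> mat_of_rows xss $ ix a $ ix b = xss ! a ! b"
  by (simp add: mat_of_rows_def idx4_ix)

definition mk :: "(nat \<Rightarrow> nat \<Rightarrow> int) \<Rightarrow> int list list" where
  "mk f = map (\<lambda>a. map (f a) [0..<4]) [0..<4]"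

lemma mor_mk: "mat_of_rows (mk f) = (\<chi> r c. f (idx4 r) (idx4 c))"
  by (simp add: mat_of_rows_def mk_def idx4_lt)

definition lst :: "pmmat \<Rightarrow> int list list" where
  "lst A = mk (\<lambda>a b. A $ ix a $ ix b)"

lemma mor_lst: "mat_of_rows (lst A) = A"
  by (simp add: lst_def mor_mk ix_idx4 vec_eq_iff)

datatype st = SR nat nat | SC nat nat | NR nat | NC nat

fun app :: "st \<Rightarrow> int list list \<Rightarrow> int list list" where
  "app (SR i j) xss = mk (\<lambda>a b. xss ! Transposition.transpose i j a ! b)"
| "app (SC i j) xss = mk (\<lambda>a b. xss ! a ! Transposition.transpose i j b)"
| "app (NR i) xss = mk (\<lambda>a b. if a = i then - (xss ! a ! b) else xss ! a ! b)"
| "app (NC j) xss = mk (\<lambda>a b. if b = j then - (xss ! a ! b) else xss ! a ! b)"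

fun okst :: "st \<Rightarrow> bool" where
  "okst (SR i j) = (i < 4 \<and> j < 4)"
| "okst (SC i j) = (i < 4 \<and> j < 4)"
| "okst (NR i) = (i < 4)"
| "okst (NC i) = (i < 4)"

fun apps :: "st list \<Rightarrow> int list list \<Rightarrow> int list list" where
  "apps [] xss = xss"
| "apps (s # ss) xss = apps ss (app s xss)"

lemma idx4_tr: "i < 4 \<Longrightarrow> j < 4 \<Longrightarrow>
   idx4 (Transposition.transpose (ix i) (ix j) r) = Transposition.transpose i j (idx4 r)"
  by (auto simp: Transposition.transpose_def idx4_ix idx4_eq)

lemma step_app:
  assumes "okst s"
  shows "pm_step (mat_of_rows xss) (mat_of_rows (app s xss))"
proof (cases s)
  case (SR i j)
  have eq: "mat_of_rows (app s xss) =
     (\<chi> r c. mat_of_rows xss $ (Transposition.transpose (ix i) (ix j) r) $ c)"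
    unfolding SR app.simps mor_mk using assms SR by (simp add: mat_of_rows_def idx4_tr)
  then show ?thesis by (simp only:) (rule pm_step.swap_rows)
next
  case (SC i j)
  have eq: "mat_of_rows (app s xss) =
     (\<chi> r c. mat_of_rows xss $ r $ (Transposition.transpose (ix i) (ix j) c))"
    unfolding SC app.simps mor_mk using assms SC by (simp add: mat_of_rows_def idx4_tr)
  then show ?thesis by (simp only:) (rule pm_step.swap_cols)
next
  case (NR i)
  have eq: "mat_of_rows (app s xss) =
     (\<chi> r c. if r = ix i then - (mat_of_rows xss $ r $ c) else mat_of_rows xss $ r $ c)"
    unfolding NR app.simps mor_mk using assms NR by (auto simp: mat_of_rows_def idx4_eq vec_eq_iff)
  then show ?thesis by (simp only:) (rule pm_step.neg_row)
next
  case (NC i)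
  have eq: "mat_of_rows (app s xss) =
     (\<chi> r c. if c = ix i then - (mat_of_rows xss $ r $ c) else mat_of_rows xss $ r $ c)"
    unfolding NC app.simps mor_mk using assms NC by (auto simp: mat_of_rows_def idx4_eq vec_eq_iff)
  then show ?thesis by (simp only:) (rule pm_step.neg_col)
qed

lemma apps_equiv: "list_all okst ss \<Longrightarrow> pm_equiv (mat_of_rows xss) (mat_of_rows (apps ss xss))"
proof (induction ss arbitrary: xss)
  case Nil then show ?case by (simp add: pm_equiv_def)
next
  case (Cons s ss)
  then have "pm_step (mat_of_rows xss) (mat_of_rows (app s xss))" by (simp add: step_app)
  with Cons show ?case
    by (simp add: pm_equiv_def) (meson converse_rtranclp_into_rtranclp)
qed



definition R4 :: "pmmat \<Rightarrow> int" where
  "R4 A = (\<Sum>i\<in>UNIV. \<Sum>j\<in>UNIV. (\<Sum>k\<in>UNIV. A $ i $ k * A $ j $ k) ^ 4)"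
definition C4 :: "pmmat \<Rightarrow> int" where
  "C4 A = (\<Sum>i\<in>UNIV. \<Sum>j\<in>UNIV. (\<Sum>k\<in>UNIV. A $ k $ i * A $ k $ j) ^ 4)"

lemma sumT: "(\<Sum>x\<in>(UNIV::4 set). f (Transposition.transpose i j x)) = (\<Sum>x\<in>UNIV. f x)"
  using sum.permute[OF permutes_swap_id[of i UNIV j], of f] by (simp add: o_def)

lemma inv_step: "pm_step A B \<Longrightarrow> R4 A = R4 B \<and> C4 A = C4 B"
proof (induction rule: pm_step.induct)
  case (swap_rows A i j)
  define t where "t = Transposition.transpose i j"
  define g where "g = (\<lambda>a b. (\<Sum>k\<in>UNIV. A $ a $ k * A $ b $ k) ^ 4)"
  have "(\<Sum>a\<in>UNIV. \<Sum>b\<in>UNIV. g (t a) (t b)) = (\<Sum>a\<in>UNIV. \<Sum>b\<in>UNIV. g (t a) b)"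
    unfolding t_def by (rule sum.cong[OF refl], rule sumT)
  also have "\<dots> = (\<Sum>a\<in>UNIV. \<Sum>b\<in>UNIV. g a b)"
    unfolding t_def by (rule sumT[where f = "\<lambda>a. \<Sum>b\<in>UNIV. g a b"])
  finally have "R4 A = R4 (\<chi> r c. A $ t r $ c)" by (simp add: R4_def g_def)
  moreover have "C4 A = C4 (\<chi> r c. A $ t r $ c)"
    unfolding C4_def t_def
    by (simp, rule sum.cong[OF refl], rule sum.cong[OF refl], subst sumT[where f = "\<lambda>k. A $ k $ _ * A $ k $ _", symmetric], rule refl)
  ultimately show ?case by (simp add: t_def)
next
  case (swap_cols A i j)
  define t where "t = Transposition.transpose i j"
  define g where "g = (\<lambda>a b. (\<Sum>k\<in>UNIV. A $ k $ a * A $ k $ b) ^ 4)"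
  have "(\<Sum>a\<in>UNIV. \<Sum>b\<in>UNIV. g (t a) (t b)) = (\<Sum>a\<in>UNIV. \<Sum>b\<in>UNIV. g (t a) b)"
    unfolding t_def by (rule sum.cong[OF refl], rule sumT)
  also have "\<dots> = (\<Sum>a\<in>UNIV. \<Sum>b\<in>UNIV. g a b)"
    unfolding t_def by (rule sumT[where f = "\<lambda>a. \<Sum>b\<in>UNIV. g a b"])
  finally have "C4 A = C4 (\<chi> r c. A $ r $ t c)" by (simp add: C4_def g_def)
  moreover have "R4 A = R4 (\<chi> r c. A $ r $ t c)"
    unfolding R4_def t_def
    by (simp, rule sum.cong[OF refl], rule sum.cong[OF refl], subst sumT[where f = "\<lambda>k. A $ _ $ k * A $ _ $ k", symmetric], rule refl)
  ultimately show ?case by (simp add: t_def)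
next
  case (neg_row A i)
  have 1: "(\<Sum>k\<in>UNIV. (if a = i then - A $ a $ k else A $ a $ k) * (if b = i then - A $ b $ k else A $ b $ k)) ^ 4
      = (\<Sum>k\<in>UNIV. A $ a $ k * A $ b $ k) ^ 4" for a b
    by (cases "a = i"; cases "b = i") (simp_all add: sum_negf)
  have 2: "(\<Sum>k\<in>UNIV. (if k = i then - A $ k $ a else A $ k $ a) * (if k = i then - A $ k $ b else A $ k $ b))
      = (\<Sum>k\<in>UNIV. A $ k $ a * A $ k $ b)" for a b
    by (rule sum.cong) auto
  show ?case by (simp add: R4_def C4_def 1 2)
next
  case (neg_col A j)
  have 1: "(\<Sum>k\<in>UNIV. (if a = j then - A $ k $ a else A $ k $ a) * (if b = j then - A $ k $ b else A $ k $ b)) ^ 4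
      = (\<Sum>k\<in>UNIV. A $ k $ a * A $ k $ b) ^ 4" for a b
    by (cases "a = j"; cases "b = j") (simp_all add: sum_negf)
  have 2: "(\<Sum>k\<in>UNIV. (if k = j then - A $ a $ k else A $ a $ k) * (if k = j then - A $ b $ k else A $ b $ k))
      = (\<Sum>k\<in>UNIV. A $ a $ k * A $ b $ k)" for a b
    by (rule sum.cong) auto
  show ?case by (simp add: R4_def C4_def 1 2)
qed

lemma inv_equiv: "pm_equiv A B \<Longrightarrow> R4 A = R4 B \<and> C4 A = C4 B"
  unfolding pm_equiv_def
  by (induction rule: rtranclp_induct) (auto dest: inv_step)

lemma perm_neg_row: "permanent (\<chi> r c. if r = i then - (A $ r $ c) else A $ r $ c) = - permanent A"
proof -
  have "(\<Prod>k\<in>UNIV. (\<chi> r c. if r = i then - (A $ r $ c) else A $ r $ c) $ k $ p k)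
        = - (\<Prod>k\<in>UNIV. A $ k $ p k)" for p :: "4 \<Rightarrow> 4"
  proof -
    have "(\<Prod>k\<in>UNIV. (\<chi> r c. if r = i then - (A $ r $ c) else A $ r $ c) $ k $ p k)
       = (- A $ i $ p i) * (\<Prod>k\<in>UNIV - {i}. A $ k $ p k)"
      by (subst prod.remove[of _ i]) (auto intro!: prod.cong)
    also have "\<dots> = - (\<Prod>k\<in>UNIV. A $ k $ p k)"
      by (subst (2) prod.remove[of _ i]) auto
    finally show ?thesis .
  qed
  then show ?thesis by (simp add: permanent_def sum_negf)
qed

lemma perm_neg_col: "permanent (\<chi> r c. if c = j then - (A $ r $ c) else A $ r $ c) = - permanent A"
proof -
  have "(\<Prod>k\<in>UNIV. (\<chi> r c. if c = j then - (A $ r $ c) else A $ r $ c) $ k $ p k)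
        = - (\<Prod>k\<in>UNIV. A $ k $ p k)" if p: "p permutes (UNIV :: 4 set)" for p :: "4 \<Rightarrow> 4"
  proof -
    obtain m where m: "p m = j" using p by (metis permutes_surj surjD)
    have ne: "k \<noteq> m \<Longrightarrow> p k \<noteq> j" for k using p m by (metis permutes_inj injD)
    have "(\<Prod>k\<in>UNIV. (\<chi> r c. if c = j then - (A $ r $ c) else A $ r $ c) $ k $ p k)
       = (- A $ m $ p m) * (\<Prod>k\<in>UNIV - {m}. A $ k $ p k)"
      using m ne by (subst prod.remove[of _ m]) (auto intro!: prod.cong)
    also have "\<dots> = - (\<Prod>k\<in>UNIV. A $ k $ p k)"
      by (subst (2) prod.remove[of _ m]) auto
    finally show ?thesis .
  qed
  then show ?thesis by (simp add: permanent_def sum_negf)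
qed

definition perms4 :: "nat list list" where
  "perms4 = [[0,1,2,3], [0,1,3,2], [0,2,1,3], [0,2,3,1], [0,3,1,2], [0,3,2,1], [1,0,2,3], [1,0,3,2], [1,2,0,3], [1,2,3,0], [1,3,0,2], [1,3,2,0], [2,0,1,3], [2,0,3,1], [2,1,0,3], [2,1,3,0], [2,3,0,1], [2,3,1,0], [3,0,1,2], [3,0,2,1], [3,1,0,2], [3,1,2,0], [3,2,0,1], [3,2,1,0]]"

definition permL :: "int list list \<Rightarrow> int" where
  "permL xss = sum_list (map (\<lambda>p. xss ! 0 ! (p ! 0) * xss ! 1 ! (p ! 1) * xss ! 2 ! (p ! 2) * xss ! 3 ! (p ! 3)) perms4)"

lemma perm_sing: "{p. p permutes {a}} = {id}"
  by (auto simp: permutes_sing)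

lemma permanent_mor: "permanent (mat_of_rows xss) = permL xss"
proof -
  have U: "(UNIV :: 4 set) = insert 1 (insert 2 (insert 3 {4}))" by (simp add: UNIV_4)
  show ?thesis
    unfolding permanent_def U
    apply (simp add: sum_over_permutations_insert perm_sing)
    apply (simp add: Transposition.transpose_def mat_of_rows_def idx4_def permL_def perms4_def)
    done
qed



definition tbl :: "(int list \<times> st list) list" where
  "tbl = [([-1,-1,1,1,1,1,1,1,1], [(SR 0 1), (SC 1 3), (SC 2 3), (NR 0)]),
  ([-1,1,-1,1,1,1,1,1,1], [(SR 0 1), (SC 1 2), (NR 0)]),
  ([1,-1,-1,1,1,1,1,1,1], [(SR 0 1), (NR 0)]),
  ([-1,1,1,-1,1,1,1,1,1], [(SR 1 3), (SR 2 3), (SC 0 1), (NR 0), (NR 1), (NR 2), (NR 3), (NC 1), (NC 2), (NC 3)]),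
  ([1,-1,1,1,-1,1,1,1,1], [(SR 1 3), (SR 2 3), (SC 0 2), (SC 1 2), (NR 0), (NR 1), (NR 2), (NR 3), (NC 1), (NC 2), (NC 3)]),
  ([1,1,1,-1,-1,1,1,1,1], [(SR 0 2), (SR 1 2), (SC 1 3), (SC 2 3), (NR 0)]),
  ([-1,1,-1,-1,-1,1,1,1,1], [(SR 0 1), (SR 1 2), (SC 1 2), (NR 0)]),
  ([1,-1,-1,-1,-1,1,1,1,1], [(SR 0 1), (SR 1 2), (NR 0)]),
  ([1,1,-1,1,1,-1,1,1,1], [(SR 1 3), (SR 2 3), (SC 0 3), (SC 1 3), (SC 2 3), (NR 0), (NR 1), (NR 2), (NR 3), (NC 1), (NC 2), (NC 3)]),
  ([1,1,1,-1,1,-1,1,1,1], [(SR 0 2), (SR 1 2), (SC 1 2), (NR 0)]),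
  ([-1,-1,1,-1,1,-1,1,1,1], [(SR 0 1), (SR 1 2), (SC 1 3), (SC 2 3), (NR 0)]),
  ([1,-1,-1,-1,1,-1,1,1,1], [(SR 0 1), (SR 1 2), (SC 2 3), (NR 0)]),
  ([1,1,1,1,-1,-1,1,1,1], [(SR 0 2), (SR 1 2), (NR 0)]),
  ([-1,-1,1,1,-1,-1,1,1,1], [(SR 0 1), (SR 1 2), (SC 1 3), (NR 0)]),
  ([-1,1,-1,1,-1,-1,1,1,1], [(SR 0 1), (SR 1 2), (SC 1 2), (SC 2 3), (NR 0)]),
  ([-1,-1,-1,-1,-1,-1,1,1,1], [(SR 1 3), (SR 2 3), (NR 0), (NR 1), (NC 1), (NC 2), (NC 3)]),
  ([-1,1,1,1,1,1,-1,1,1], [(SR 1 2), (SC 0 1), (NR 0), (NR 1), (NR 2), (NR 3), (NC 1), (NC 2), (NC 3)]),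
  ([1,1,1,-1,1,1,-1,1,1], [(SC 0 1), (NR 0), (NR 1), (NR 2), (NR 3), (NC 1), (NC 2), (NC 3)]),
  ([-1,-1,1,1,-1,1,-1,1,1], [(SR 1 2), (SC 0 1), (SC 1 2), (NR 0), (NR 1), (NR 2), (NR 3), (NC 1), (NC 2), (NC 3)]),
  ([-1,1,-1,1,-1,1,-1,1,1], [(SR 1 2), (SR 2 3), (SC 0 2), (SC 1 2), (SC 2 3), (NR 0), (NR 1), (NC 2), (NC 3)]),
  ([1,-1,-1,1,-1,1,-1,1,1], [(SR 1 2), (SR 2 3), (SC 0 2), (SC 1 3), (NR 0), (NR 1), (NR 3), (NC 2), (NC 3)]),
  ([1,-1,1,-1,-1,1,-1,1,1], [(SC 0 1), (SC 1 2), (NR 0), (NR 1), (NR 2), (NR 3), (NC 1), (NC 2), (NC 3)]),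
  ([1,1,-1,-1,-1,1,-1,1,1], [(SR 2 3), (SC 0 3), (SC 1 3), (NR 0), (NR 1), (NC 2), (NC 3)]),
  ([-1,-1,-1,-1,-1,1,-1,1,1], [(SR 2 3), (SC 1 3), (NR 0), (NC 2), (NC 3)]),
  ([-1,-1,1,1,1,-1,-1,1,1], [(SR 1 2), (SR 2 3), (SC 0 3), (SC 1 3), (NR 0), (NR 1), (NC 2), (NC 3)]),
  ([-1,1,-1,1,1,-1,-1,1,1], [(SR 1 2), (SC 0 1), (SC 1 3), (SC 2 3), (NR 0), (NR 1), (NR 2), (NR 3), (NC 1), (NC 2), (NC 3)]),
  ([1,-1,-1,1,1,-1,-1,1,1], [(SR 1 2), (SR 2 3), (SC 0 3), (SC 1 2), (SC 2 3), (NR 0), (NR 1), (NR 3), (NC 2), (NC 3)]),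
  ([1,-1,1,-1,1,-1,-1,1,1], [(SR 2 3), (SC 0 2), (SC 1 2), (SC 2 3), (NR 0), (NR 1), (NC 2), (NC 3)]),
  ([1,1,-1,-1,1,-1,-1,1,1], [(SC 0 1), (SC 1 3), (SC 2 3), (NR 0), (NR 1), (NR 2), (NR 3), (NC 1), (NC 2), (NC 3)]),
  ([-1,-1,-1,-1,1,-1,-1,1,1], [(SR 2 3), (SC 1 2), (SC 2 3), (NR 0), (NC 2), (NC 3)]),
  ([1,-1,1,1,-1,-1,-1,1,1], [(SR 2 3), (SC 0 2), (SC 1 3), (NR 0), (NR 1), (NR 3), (NC 2), (NC 3)]),
  ([1,1,-1,1,-1,-1,-1,1,1], [(SR 2 3), (SC 0 3), (SC 1 2), (SC 2 3), (NR 0), (NR 1), (NR 3), (NC 2), (NC 3)]),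
  ([-1,-1,-1,1,-1,-1,-1,1,1], [(SC 0 1), (NR 0), (NR 3), (NC 1), (NC 2), (NC 3)]),
  ([-1,-1,1,-1,-1,-1,-1,1,1], [(SR 1 2), (SR 2 3), (SC 1 3), (NR 0), (NC 2), (NC 3)]),
  ([-1,1,-1,-1,-1,-1,-1,1,1], [(SR 1 2), (SR 2 3), (SC 1 2), (SC 2 3), (NR 0), (NC 2), (NC 3)]),
  ([1,-1,-1,-1,-1,-1,-1,1,1], [(SR 1 2), (SC 0 1), (NR 0), (NR 3), (NC 1), (NC 2), (NC 3)]),
  ([1,-1,1,1,1,1,1,-1,1], [(SR 1 2), (SC 0 2), (SC 1 2), (NR 0), (NR 1), (NR 2), (NR 3), (NC 1), (NC 2), (NC 3)]),
  ([-1,-1,1,-1,1,1,1,-1,1], [(SR 1 2), (SC 0 2), (NR 0), (NR 1), (NR 2), (NR 3), (NC 1), (NC 2), (NC 3)]),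
  ([-1,1,-1,-1,1,1,1,-1,1], [(SR 1 2), (SR 2 3), (SC 0 1), (SC 1 3), (SC 2 3), (NR 0), (NR 1), (NR 3), (NC 2), (NC 3)]),
  ([1,-1,-1,-1,1,1,1,-1,1], [(SR 1 2), (SR 2 3), (SC 0 1), (SC 2 3), (NR 0), (NR 1), (NC 2), (NC 3)]),
  ([1,1,1,1,-1,1,1,-1,1], [(SC 0 2), (SC 1 2), (NR 0), (NR 1), (NR 2), (NR 3), (NC 1), (NC 2), (NC 3)]),
  ([-1,1,1,-1,-1,1,1,-1,1], [(SC 0 2), (NR 0), (NR 1), (NR 2), (NR 3), (NC 1), (NC 2), (NC 3)]),
  ([1,1,-1,-1,-1,1,1,-1,1], [(SR 2 3), (SC 0 3), (SC 1 3), (SC 2 3), (NR 0), (NR 1), (NC 2), (NC 3)]),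
  ([-1,-1,-1,-1,-1,1,1,-1,1], [(SR 2 3), (SC 1 3), (SC 2 3), (NR 0), (NC 2), (NC 3)]),
  ([-1,-1,1,1,1,-1,1,-1,1], [(SR 1 2), (SR 2 3), (SC 0 3), (SC 1 3), (SC 2 3), (NR 0), (NR 1), (NC 2), (NC 3)]),
  ([-1,1,-1,1,1,-1,1,-1,1], [(SR 1 2), (SR 2 3), (SC 0 3), (SC 2 3), (NR 0), (NR 1), (NR 3), (NC 2), (NC 3)]),
  ([1,-1,-1,1,1,-1,1,-1,1], [(SR 1 2), (SC 0 2), (SC 1 3), (NR 0), (NR 1), (NR 2), (NR 3), (NC 1), (NC 2), (NC 3)]),
  ([-1,1,1,-1,1,-1,1,-1,1], [(SR 2 3), (SC 0 1), (SC 1 3), (SC 2 3), (NR 0), (NR 1), (NR 3), (NC 2), (NC 3)]),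
  ([1,1,-1,-1,1,-1,1,-1,1], [(SR 2 3), (SC 0 3), (SC 2 3), (NR 0), (NR 1), (NR 3), (NC 2), (NC 3)]),
  ([-1,-1,-1,-1,1,-1,1,-1,1], [(SC 0 2), (SC 1 2), (NR 0), (NR 3), (NC 1), (NC 2), (NC 3)]),
  ([-1,1,1,1,-1,-1,1,-1,1], [(SR 2 3), (SC 0 1), (SC 2 3), (NR 0), (NR 1), (NC 2), (NC 3)]),
  ([1,1,-1,1,-1,-1,1,-1,1], [(SC 0 2), (SC 1 3), (NR 0), (NR 1), (NR 2), (NR 3), (NC 1), (NC 2), (NC 3)]),
  ([-1,-1,-1,1,-1,-1,1,-1,1], [(SR 2 3), (SC 2 3), (NR 0), (NC 2), (NC 3)]),
  ([-1,-1,1,-1,-1,-1,1,-1,1], [(SR 1 2), (SR 2 3), (SC 1 3), (SC 2 3), (NR 0), (NC 2), (NC 3)]),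
  ([-1,1,-1,-1,-1,-1,1,-1,1], [(SR 1 2), (SC 0 2), (SC 1 2), (NR 0), (NR 3), (NC 1), (NC 2), (NC 3)]),
  ([1,-1,-1,-1,-1,-1,1,-1,1], [(SR 1 2), (SR 2 3), (SC 2 3), (NR 0), (NC 2), (NC 3)]),
  ([1,1,1,1,1,1,-1,-1,1], [(SR 0 3), (SR 1 3), (SR 2 3), (SC 1 3), (SC 2 3), (NR 0)]),
  ([-1,1,-1,1,1,1,-1,-1,1], [(SR 0 1), (SR 1 3), (SR 2 3), (SC 1 2), (NR 0)]),
  ([1,-1,-1,1,1,1,-1,-1,1], [(SR 0 1), (SR 1 3), (SR 2 3), (NR 0)]),
  ([1,-1,1,-1,1,1,-1,-1,1], [(SR 2 3), (SC 0 1), (SC 1 2), (NR 0), (NR 1), (NR 2), (NR 3), (NC 1), (NC 2), (NC 3)]),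
  ([1,1,-1,-1,1,1,-1,-1,1], [(SC 0 3), (SC 1 3), (NR 0), (NR 1), (NC 2), (NC 3)]),
  ([-1,-1,-1,-1,1,1,-1,-1,1], [(SC 1 3), (NR 0), (NC 2), (NC 3)]),
  ([-1,1,1,1,-1,1,-1,-1,1], [(SR 2 3), (SC 0 2), (NR 0), (NR 1), (NR 2), (NR 3), (NC 1), (NC 2), (NC 3)]),
  ([1,1,-1,1,-1,1,-1,-1,1], [(SC 0 3), (SC 1 3), (SC 2 3), (NR 0), (NR 1), (NC 2), (NC 3)]),
  ([-1,-1,-1,1,-1,1,-1,-1,1], [(SC 1 3), (SC 2 3), (NR 0), (NC 2), (NC 3)]),
  ([-1,-1,1,-1,-1,1,-1,-1,1], [(SC 1 3), (SC 2 3), (NR 0), (NC 2), (NC 3)]),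
  ([-1,1,-1,-1,-1,1,-1,-1,1], [(SC 1 3), (NR 0), (NC 2), (NC 3)]),
  ([1,-1,-1,-1,-1,1,-1,-1,1], [(SC 1 3), (SC 2 3), (NR 0), (NC 2), (NC 3)]),
  ([-1,1,1,1,1,-1,-1,-1,1], [(SC 0 1), (SC 1 2), (NR 0), (NR 1), (NR 3), (NC 2), (NC 3)]),
  ([1,-1,1,1,1,-1,-1,-1,1], [(SC 0 2), (NR 0), (NR 1), (NR 3), (NC 2), (NC 3)]),
  ([-1,-1,-1,1,1,-1,-1,-1,1], [(SR 2 3), (SC 0 3), (SC 1 3), (SC 2 3), (NR 0), (NR 3), (NC 1), (NC 2), (NC 3)]),
  ([1,1,1,-1,1,-1,-1,-1,1], [(SR 0 2), (SR 1 3), (SC 1 2), (NR 0)]),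
  ([-1,-1,1,-1,1,-1,-1,-1,1], [(SR 1 2), (SC 1 3), (NR 0), (NC 2), (NC 3)]),
  ([-1,1,-1,-1,1,-1,-1,-1,1], [(SR 1 3), (SR 2 3), (SC 1 2), (SC 2 3), (NR 0), (NC 2), (NC 3)]),
  ([1,1,1,1,-1,-1,-1,-1,1], [(SR 0 2), (SR 1 3), (NR 0)]),
  ([-1,-1,1,1,-1,-1,-1,-1,1], [(SR 1 2), (SC 1 3), (SC 2 3), (NR 0), (NC 2), (NC 3)]),
  ([1,-1,-1,1,-1,-1,-1,-1,1], [(SR 1 3), (SR 2 3), (SC 2 3), (NR 0), (NC 2), (NC 3)]),
  ([-1,1,1,-1,-1,-1,-1,-1,1], [(SC 0 1), (SC 1 2), (SC 2 3), (NR 0), (NR 1), (NR 2), (NR 3), (NC 2), (NC 3)]),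
  ([1,-1,1,-1,-1,-1,-1,-1,1], [(SC 0 2), (SC 2 3), (NR 0), (NR 1), (NR 2), (NR 3), (NC 2), (NC 3)]),
  ([1,1,-1,-1,-1,-1,-1,-1,1], [(SR 2 3), (SC 1 3), (SC 2 3), (NR 0), (NR 1), (NC 1), (NC 2), (NC 3)]),
  ([1,1,-1,1,1,1,1,1,-1], [(SR 1 2), (SC 0 3), (SC 1 3), (SC 2 3), (NR 0), (NR 1), (NR 2), (NR 3), (NC 1), (NC 2), (NC 3)]),
  ([-1,-1,1,-1,1,1,1,1,-1], [(SR 1 2), (SR 2 3), (SC 0 1), (SC 1 2), (NR 0), (NR 1), (NR 3), (NC 2), (NC 3)]),
  ([-1,1,-1,-1,1,1,1,1,-1], [(SR 1 2), (SC 0 3), (SC 2 3), (NR 0), (NR 1), (NR 2), (NR 3), (NC 1), (NC 2), (NC 3)]),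
  ([1,-1,-1,-1,1,1,1,1,-1], [(SR 1 2), (SR 2 3), (SC 0 1), (NR 0), (NR 1), (NC 2), (NC 3)]),
  ([-1,-1,1,1,-1,1,1,1,-1], [(SR 1 2), (SR 2 3), (SC 0 2), (NR 0), (NR 1), (NR 3), (NC 2), (NC 3)]),
  ([-1,1,-1,1,-1,1,1,1,-1], [(SR 1 2), (SR 2 3), (SC 0 2), (SC 1 2), (NR 0), (NR 1), (NC 2), (NC 3)]),
  ([1,-1,-1,1,-1,1,1,1,-1], [(SR 1 2), (SC 0 3), (SC 1 2), (SC 2 3), (NR 0), (NR 1), (NR 2), (NR 3), (NC 1), (NC 2), (NC 3)]),
  ([-1,1,1,-1,-1,1,1,1,-1], [(SR 2 3), (SC 0 1), (SC 1 2), (NR 0), (NR 1), (NR 3), (NC 2), (NC 3)]),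
  ([1,-1,1,-1,-1,1,1,1,-1], [(SR 2 3), (SC 0 2), (NR 0), (NR 1), (NR 3), (NC 2), (NC 3)]),
  ([-1,-1,-1,-1,-1,1,1,1,-1], [(SC 0 3), (SC 1 3), (SC 2 3), (NR 0), (NR 3), (NC 1), (NC 2), (NC 3)]),
  ([1,1,1,1,1,-1,1,1,-1], [(SC 0 3), (SC 1 3), (SC 2 3), (NR 0), (NR 1), (NR 2), (NR 3), (NC 1), (NC 2), (NC 3)]),
  ([-1,1,1,-1,1,-1,1,1,-1], [(SC 0 3), (SC 2 3), (NR 0), (NR 1), (NR 2), (NR 3), (NC 1), (NC 2), (NC 3)]),
  ([1,-1,1,-1,1,-1,1,1,-1], [(SR 2 3), (SC 0 2), (SC 1 2), (NR 0), (NR 1), (NC 2), (NC 3)]),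
  ([-1,-1,-1,-1,1,-1,1,1,-1], [(SR 2 3), (SC 1 2), (NR 0), (NC 2), (NC 3)]),
  ([-1,1,1,1,-1,-1,1,1,-1], [(SR 2 3), (SC 0 1), (NR 0), (NR 1), (NC 2), (NC 3)]),
  ([1,-1,1,1,-1,-1,1,1,-1], [(SC 0 3), (SC 1 2), (SC 2 3), (NR 0), (NR 1), (NR 2), (NR 3), (NC 1), (NC 2), (NC 3)]),
  ([-1,-1,-1,1,-1,-1,1,1,-1], [(SR 2 3), (NR 0), (NC 2), (NC 3)]),
  ([-1,-1,1,-1,-1,-1,1,1,-1], [(SR 1 2), (SC 0 3), (SC 1 3), (SC 2 3), (NR 0), (NR 3), (NC 1), (NC 2), (NC 3)]),
  ([-1,1,-1,-1,-1,-1,1,1,-1], [(SR 1 2), (SR 2 3), (SC 1 2), (NR 0), (NC 2), (NC 3)]),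
  ([1,-1,-1,-1,-1,-1,1,1,-1], [(SR 1 2), (SR 2 3), (NR 0), (NC 2), (NC 3)]),
  ([1,1,1,1,1,1,-1,1,-1], [(SR 0 3), (SR 1 3), (SR 2 3), (SC 1 2), (NR 0)]),
  ([-1,-1,1,1,1,1,-1,1,-1], [(SR 0 1), (SR 1 3), (SR 2 3), (SC 1 3), (SC 2 3), (NR 0)]),
  ([1,-1,-1,1,1,1,-1,1,-1], [(SR 0 1), (SR 1 3), (SR 2 3), (SC 2 3), (NR 0)]),
  ([1,-1,1,-1,1,1,-1,1,-1], [(SC 0 2), (SC 1 2), (SC 2 3), (NR 0), (NR 1), (NC 2), (NC 3)]),
  ([1,1,-1,-1,1,1,-1,1,-1], [(SR 2 3), (SC 0 1), (SC 1 3), (SC 2 3), (NR 0), (NR 1), (NR 2), (NR 3), (NC 1), (NC 2), (NC 3)]),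
  ([-1,-1,-1,-1,1,1,-1,1,-1], [(SC 1 2), (SC 2 3), (NR 0), (NC 2), (NC 3)]),
  ([-1,1,1,1,-1,1,-1,1,-1], [(SC 0 1), (SC 1 3), (SC 2 3), (NR 0), (NR 1), (NR 3), (NC 2), (NC 3)]),
  ([1,1,-1,1,-1,1,-1,1,-1], [(SC 0 3), (SC 2 3), (NR 0), (NR 1), (NR 3), (NC 2), (NC 3)]),
  ([-1,-1,-1,1,-1,1,-1,1,-1], [(SR 2 3), (SC 0 2), (SC 1 2), (NR 0), (NR 3), (NC 1), (NC 2), (NC 3)]),
  ([1,1,1,-1,-1,1,-1,1,-1], [(SR 0 2), (SR 1 3), (SC 1 3), (SC 2 3), (NR 0)]),
  ([-1,-1,1,-1,-1,1,-1,1,-1], [(SR 1 3), (SR 2 3), (SC 1 3), (NR 0), (NC 2), (NC 3)]),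
  ([-1,1,-1,-1,-1,1,-1,1,-1], [(SR 1 2), (SC 1 2), (SC 2 3), (NR 0), (NC 2), (NC 3)]),
  ([-1,1,1,1,1,-1,-1,1,-1], [(SR 2 3), (SC 0 3), (SC 2 3), (NR 0), (NR 1), (NR 2), (NR 3), (NC 1), (NC 2), (NC 3)]),
  ([1,-1,1,1,1,-1,-1,1,-1], [(SC 0 2), (SC 1 2), (NR 0), (NR 1), (NC 2), (NC 3)]),
  ([-1,-1,-1,1,1,-1,-1,1,-1], [(SC 1 2), (NR 0), (NC 2), (NC 3)]),
  ([-1,-1,1,-1,1,-1,-1,1,-1], [(SC 1 2), (SC 2 3), (NR 0), (NC 2), (NC 3)]),
  ([-1,1,-1,-1,1,-1,-1,1,-1], [(SC 1 2), (NR 0), (NC 2), (NC 3)]),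
  ([1,-1,-1,-1,1,-1,-1,1,-1], [(SC 1 2), (NR 0), (NC 2), (NC 3)]),
  ([1,1,1,1,-1,-1,-1,1,-1], [(SR 0 2), (SR 1 3), (SC 2 3), (NR 0)]),
  ([-1,1,-1,1,-1,-1,-1,1,-1], [(SR 1 2), (SC 1 2), (NR 0), (NC 2), (NC 3)]),
  ([1,-1,-1,1,-1,-1,-1,1,-1], [(SR 1 3), (SR 2 3), (NR 0), (NC 2), (NC 3)]),
  ([-1,1,1,-1,-1,-1,-1,1,-1], [(SC 0 1), (SC 1 3), (NR 0), (NR 1), (NR 2), (NR 3), (NC 2), (NC 3)]),
  ([1,-1,1,-1,-1,-1,-1,1,-1], [(SR 2 3), (SC 1 2), (NR 0), (NR 1), (NC 1), (NC 2), (NC 3)]),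
  ([1,1,-1,-1,-1,-1,-1,1,-1], [(SC 0 3), (NR 0), (NR 1), (NR 2), (NR 3), (NC 2), (NC 3)]),
  ([1,1,1,1,1,1,1,-1,-1], [(SR 0 3), (SR 1 3), (SR 2 3), (NR 0)]),
  ([-1,-1,1,1,1,1,1,-1,-1], [(SR 0 1), (SR 1 3), (SR 2 3), (SC 1 3), (NR 0)]),
  ([-1,1,-1,1,1,1,1,-1,-1], [(SR 0 1), (SR 1 3), (SR 2 3), (SC 1 2), (SC 2 3), (NR 0)]),
  ([1,-1,1,-1,1,1,1,-1,-1], [(SC 0 2), (SC 1 3), (NR 0), (NR 1), (NR 3), (NC 2), (NC 3)]),
  ([1,1,-1,-1,1,1,1,-1,-1], [(SC 0 3), (SC 1 2), (SC 2 3), (NR 0), (NR 1), (NR 3), (NC 2), (NC 3)]),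
  ([-1,-1,-1,-1,1,1,1,-1,-1], [(SR 2 3), (SC 0 1), (NR 0), (NR 3), (NC 1), (NC 2), (NC 3)]),
  ([-1,1,1,1,-1,1,1,-1,-1], [(SC 0 1), (SC 2 3), (NR 0), (NR 1), (NC 2), (NC 3)]),
  ([1,1,-1,1,-1,1,1,-1,-1], [(SR 2 3), (SC 0 2), (SC 1 3), (NR 0), (NR 1), (NR 2), (NR 3), (NC 1), (NC 2), (NC 3)]),
  ([-1,-1,-1,1,-1,1,1,-1,-1], [(SC 2 3), (NR 0), (NC 2), (NC 3)]),
  ([1,1,1,-1,-1,1,1,-1,-1], [(SR 0 2), (SR 1 3), (SC 1 3), (NR 0)]),
  ([-1,-1,1,-1,-1,1,1,-1,-1], [(SR 1 3), (SR 2 3), (SC 1 3), (SC 2 3), (NR 0), (NC 2), (NC 3)]),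
  ([1,-1,-1,-1,-1,1,1,-1,-1], [(SR 1 2), (SC 2 3), (NR 0), (NC 2), (NC 3)]),
  ([-1,1,1,1,1,-1,1,-1,-1], [(SC 0 1), (NR 0), (NR 1), (NC 2), (NC 3)]),
  ([1,-1,1,1,1,-1,1,-1,-1], [(SR 2 3), (SC 0 3), (SC 1 2), (SC 2 3), (NR 0), (NR 1), (NR 2), (NR 3), (NC 1), (NC 2), (NC 3)]),
  ([-1,-1,-1,1,1,-1,1,-1,-1], [(NR 0), (NC 2), (NC 3)]),
  ([1,1,1,-1,1,-1,1,-1,-1], [(SR 0 2), (SR 1 3), (SC 1 2), (SC 2 3), (NR 0)]),
  ([-1,1,-1,-1,1,-1,1,-1,-1], [(SR 1 3), (SR 2 3), (SC 1 2), (NR 0), (NC 2), (NC 3)]),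
  ([1,-1,-1,-1,1,-1,1,-1,-1], [(SR 1 2), (NR 0), (NC 2), (NC 3)]),
  ([-1,-1,1,1,-1,-1,1,-1,-1], [(SC 2 3), (NR 0), (NC 2), (NC 3)]),
  ([-1,1,-1,1,-1,-1,1,-1,-1], [(NR 0), (NC 2), (NC 3)]),
  ([1,-1,-1,1,-1,-1,1,-1,-1], [(NR 0), (NC 2), (NC 3)]),
  ([-1,1,1,-1,-1,-1,1,-1,-1], [(SR 2 3), (NR 0), (NR 1), (NC 1), (NC 2), (NC 3)]),
  ([1,-1,1,-1,-1,-1,1,-1,-1], [(SC 0 2), (SC 1 3), (SC 2 3), (NR 0), (NR 1), (NR 2), (NR 3), (NC 2), (NC 3)]),
  ([1,1,-1,-1,-1,-1,1,-1,-1], [(SC 0 3), (SC 1 2), (NR 0), (NR 1), (NR 2), (NR 3), (NC 2), (NC 3)]),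
  ([-1,-1,-1,1,1,1,-1,-1,-1], [(SR 1 2), (NR 0), (NR 1), (NC 1), (NC 2), (NC 3)]),
  ([-1,-1,1,-1,1,1,-1,-1,-1], [(SR 1 2), (SR 2 3), (SC 0 1), (SC 1 2), (SC 2 3), (NR 0), (NR 1), (NR 2), (NR 3), (NC 2), (NC 3)]),
  ([-1,1,-1,-1,1,1,-1,-1,-1], [(SR 1 2), (SR 2 3), (SC 0 1), (SC 1 3), (NR 0), (NR 1), (NR 2), (NR 3), (NC 2), (NC 3)]),
  ([1,-1,-1,-1,1,1,-1,-1,-1], [(SR 1 2), (NR 0), (NR 1), (NC 1), (NC 2), (NC 3)]),
  ([-1,-1,1,1,-1,1,-1,-1,-1], [(SR 1 2), (SR 2 3), (SC 0 2), (SC 2 3), (NR 0), (NR 1), (NR 2), (NR 3), (NC 2), (NC 3)]),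
  ([-1,1,-1,1,-1,1,-1,-1,-1], [(SR 1 2), (SC 1 2), (NR 0), (NR 1), (NC 1), (NC 2), (NC 3)]),
  ([1,-1,-1,1,-1,1,-1,-1,-1], [(SR 1 2), (SR 2 3), (SC 0 2), (SC 1 3), (SC 2 3), (NR 0), (NR 1), (NR 2), (NR 3), (NC 2), (NC 3)]),
  ([-1,1,1,-1,-1,1,-1,-1,-1], [(SR 2 3), (SC 0 1), (SC 1 2), (SC 2 3), (NR 0), (NR 1), (NR 2), (NR 3), (NC 2), (NC 3)]),
  ([1,-1,1,-1,-1,1,-1,-1,-1], [(SR 2 3), (SC 0 2), (SC 2 3), (NR 0), (NR 1), (NR 2), (NR 3), (NC 2), (NC 3)]),
  ([1,1,-1,-1,-1,1,-1,-1,-1], [(SC 1 3), (SC 2 3), (NR 0), (NR 1), (NC 1), (NC 2), (NC 3)]),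
  ([-1,-1,1,1,1,-1,-1,-1,-1], [(SR 1 2), (SC 1 3), (SC 2 3), (NR 0), (NR 1), (NC 1), (NC 2), (NC 3)]),
  ([-1,1,-1,1,1,-1,-1,-1,-1], [(SR 1 2), (SR 2 3), (SC 0 3), (NR 0), (NR 1), (NR 2), (NR 3), (NC 2), (NC 3)]),
  ([1,-1,-1,1,1,-1,-1,-1,-1], [(SR 1 2), (SR 2 3), (SC 0 3), (SC 1 2), (NR 0), (NR 1), (NR 2), (NR 3), (NC 2), (NC 3)]),
  ([-1,1,1,-1,1,-1,-1,-1,-1], [(SR 2 3), (SC 0 1), (SC 1 3), (NR 0), (NR 1), (NR 2), (NR 3), (NC 2), (NC 3)]),
  ([1,-1,1,-1,1,-1,-1,-1,-1], [(SC 1 2), (NR 0), (NR 1), (NC 1), (NC 2), (NC 3)]),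
  ([1,1,-1,-1,1,-1,-1,-1,-1], [(SR 2 3), (SC 0 3), (NR 0), (NR 1), (NR 2), (NR 3), (NC 2), (NC 3)]),
  ([-1,1,1,1,-1,-1,-1,-1,-1], [(NR 0), (NR 1), (NC 1), (NC 2), (NC 3)]),
  ([1,-1,1,1,-1,-1,-1,-1,-1], [(SR 2 3), (SC 0 2), (SC 1 3), (SC 2 3), (NR 0), (NR 1), (NR 2), (NR 3), (NC 2), (NC 3)]),
  ([1,1,-1,1,-1,-1,-1,-1,-1], [(SR 2 3), (SC 0 3), (SC 1 2), (NR 0), (NR 1), (NR 2), (NR 3), (NC 2), (NC 3)]),
  ([1,1,1,-1,-1,-1,-1,-1,-1], [(NR 0), (NR 1), (NC 1), (NC 2), (NC 3)])]"

fun signs :: "nat \<Rightarrow> int list list" where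
  "signs 0 = [[]]"
| "signs (Suc n) = concat (map (\<lambda>l. [1 # l, -1 # l]) (signs n))"

definition nm :: "int list \<Rightarrow> int list list" where
  "nm c = [[1,1,1,1],[1,c!0,c!1,c!2],[1,c!3,c!4,c!5],[1,c!6,c!7,c!8]]"

definition Ls :: "int list list list" where
  "Ls = [[[-1,-1,1,1],[1,1,1,1],[1,1,1,1],[1,1,1,1]],
         [[-1,1,1,1],[-1,1,1,1],[1,1,1,1],[1,1,1,1]],
         [[-1,-1,1,1],[1,-1,-1,1],[1,1,1,1],[1,1,1,1]],
         [[-1,1,1,1],[-1,-1,1,1],[1,-1,1,1],[1,1,1,1]],
         [[-1,-1,1,1],[1,-1,1,1],[1,1,-1,1],[1,1,1,1]]]"

fun okw :: "st list option \<Rightarrow> int list list \<Rightarrow> bool" where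
  "okw None M = False"
| "okw (Some ss) M = (list_all okst ss \<and> apps ss M \<in> set Ls)"

lemma checkA: "list_all (\<lambda>(c,ss). list_all okst ss \<and> apps ss (nm c) \<in> set Ls) tbl" by code_simp
lemma checkB: "filter (\<lambda>c. permL (nm c) = 0) (signs 9) = map fst tbl" by code_simp



abbreviation "L1 \<equiv> [[-1,-1,1,1],[1,1,1,1],[1,1,1,1],[1,1,1,1::int]]"
abbreviation "L1t \<equiv> [[-1,1,1,1],[-1,1,1,1],[1,1,1,1],[1,1,1,1::int]]"
abbreviation "L2 \<equiv> [[-1,-1,1,1],[1,-1,-1,1],[1,1,1,1],[1,1,1,1::int]]"
abbreviation "L2t \<equiv> [[-1,1,1,1],[-1,-1,1,1],[1,-1,1,1],[1,1,1,1::int]]"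
abbreviation "L3 \<equiv> [[-1,-1,1,1],[1,-1,1,1],[1,1,-1,1],[1,1,1,1::int]]"

lemma tS1: "transpose Sigma1 = mat_of_rows L1t"
  by (simp add: Sigma1_def transpose_def mat_of_rows_def vec_eq_iff forall_4 idx4_def)
lemma tS2: "transpose Sigma2 = mat_of_rows L2t"
  by (simp add: Sigma2_def transpose_def mat_of_rows_def vec_eq_iff forall_4 idx4_def)

lemma F_eq: "{Sigma1, transpose Sigma1, Sigma2, transpose Sigma2, Sigma3} = mat_of_rows ` set Ls"
  unfolding tS1 tS2 by (simp add: Ls_def Sigma1_def Sigma2_def Sigma3_def)

lemma v1: "R4 Sigma1 = 2560 \<and> C4 Sigma1 = 2176"
  by (simp add: Sigma1_def R4_def C4_def sum4 mor_ix)
lemma v2: "R4 (transpose Sigma1) = 2176 \<and> C4 (transpose Sigma1) = 2560"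
  by (simp add: tS1 R4_def C4_def sum4 mor_ix)
lemma v3: "R4 Sigma2 = 1536 \<and> C4 Sigma2 = 1152"
  by (simp add: Sigma2_def R4_def C4_def sum4 mor_ix)
lemma v4: "R4 (transpose Sigma2) = 1152 \<and> C4 (transpose Sigma2) = 1536"
  by (simp add: tS2 R4_def C4_def sum4 mor_ix)
lemma v5: "R4 Sigma3 = 1152 \<and> C4 Sigma3 = 1152"
  by (simp add: Sigma3_def R4_def C4_def sum4 mor_ix)

lemma uniq5:
  assumes "S \<in> {Sigma1, transpose Sigma1, Sigma2, transpose Sigma2, Sigma3}"
    and "T \<in> {Sigma1, transpose Sigma1, Sigma2, transpose Sigma2, Sigma3}"
    and "R4 S = R4 T" "C4 S = C4 T"
  shows "S = T"
  using assms v1 v2 v3 v4 v5 by auto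

lemma all4: "(\<forall>a<(4::nat). P a) = (P 0 \<and> P 1 \<and> P 2 \<and> P 3)"
  by (auto simp add: less_Suc_eq eval_nat_numeral)

lemma pm_mor: "\<forall>a<4. \<forall>b<4. xss ! a ! b = 1 \<or> xss ! a ! b = -1 \<Longrightarrow> pm_matrix (mat_of_rows xss)"
  by (simp add: pm_matrix_def mat_of_rows_def idx4_lt)

lemma five_ok: "S \<in> {Sigma1, transpose Sigma1, Sigma2, transpose Sigma2, Sigma3} \<Longrightarrow>
   pm_matrix S \<and> permanent S = 0"
  unfolding F_eq Ls_def
  by (auto intro!: pm_mor[unfolded all4] simp: permanent_mor permL_def perms4_def)

lemma distinct5: "distinct [Sigma1, transpose Sigma1, Sigma2, transpose Sigma2, Sigma3]"
  using v1 v2 v3 v4 v5 by (auto dest!: arg_cong[where f = "\<lambda>M. (R4 M, C4 M)"])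

lemma set_signs: "set (signs n) = {l. length l = n \<and> set l \<subseteq> {1::int, -1}}"
proof (induction n)
  case 0 then show ?case by auto
next
  case (Suc n)
  show ?case
  proof (intro set_eqI iffI)
    fix l :: "int list" assume "l \<in> set (signs (Suc n))"
    then show "l \<in> {l. length l = Suc n \<and> set l \<subseteq> {1, -1}}" using Suc by auto
  next
    fix l :: "int list" assume "l \<in> {l. length l = Suc n \<and> set l \<subseteq> {1, -1}}"
    then obtain x l' where l: "l = x # l'" "length l' = n" "set l' \<subseteq> {1,-1}" "x = (1::int) \<or> x = -1"
      by (cases l) auto
    then show "l \<in> set (signs (Suc n))" using Suc by auto
  qed
qed

lemma negrows:
  fixes A :: pmmat
  shows "finite S \<Longrightarrow> pm_equiv A (\<chi> r c. if r \<in> S then - A$r$c else A$r$c) \<and>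
     permanent (\<chi> r c. if r \<in> S then - A$r$c else A$r$c) = (-1) ^ card S * permanent A"
proof (induction rule: finite_induct)
  case empty then show ?case by (simp add: pm_equiv_def)
next
  case (insert x F)
  define M where "M = (\<chi> r c. if r \<in> F then - A$r$c else A$r$c)"
  have eq: "(\<chi> r c. if r \<in> insert x F then - A$r$c else A$r$c) =
     (\<chi> r c. if r = x then - (M$r$c) else M$r$c)"
    using insert(2) by (auto simp: vec_eq_iff M_def)
  have "pm_step M (\<chi> r c. if r = x then - (M$r$c) else M$r$c)" by (rule pm_step.neg_row)
  then show ?case using insert(1,2,3) unfolding eq M_def[symmetric]
    by (auto simp: pm_equiv_def perm_neg_row)
qed

lemma negcols:
  fixes A :: pmmat
  shows "finite S \<Longrightarrow> pm_equiv A (\<chi> r c. if c \<in> S then - A$r$c else A$r$c) \<and>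
     permanent (\<chi> r c. if c \<in> S then - A$r$c else A$r$c) = (-1) ^ card S * permanent A"
proof (induction rule: finite_induct)
  case empty then show ?case by (simp add: pm_equiv_def)
next
  case (insert x F)
  define M where "M = (\<chi> r c. if c \<in> F then - A$r$c else A$r$c)"
  have eq: "(\<chi> r c. if c \<in> insert x F then - A$r$c else A$r$c) =
     (\<chi> r c. if c = x then - (M$r$c) else M$r$c)"
    using insert(2) by (auto simp: vec_eq_iff M_def)
  have "pm_step M (\<chi> r c. if c = x then - (M$r$c) else M$r$c)" by (rule pm_step.neg_col)
  then show ?case using insert(1,2,3) unfolding eq M_def[symmetric]
    by (auto simp: pm_equiv_def perm_neg_col)
qed



lemma upt4: "[0..<4] = [0,1,2,3::nat]"
  by (simp add: eval_nat_numeral upt_rec)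

lemma pm_cases: "pm_matrix A \<Longrightarrow> A $ i $ j = 1 \<or> A $ i $ j = -1"
  by (simp add: pm_matrix_def)

lemma exists_L:
  assumes pm: "pm_matrix A" and p0: "permanent A = 0"
  shows "\<exists>L\<in>set Ls. pm_equiv A (mat_of_rows L)"
proof -
  define o1 where "o1 = ix 0"
  define S where "S = {r. A $ r $ o1 = -1}"
  define B1 where "B1 = (\<chi> r c. if r \<in> S then - A$r$c else A$r$c)"
  have e1: "pm_equiv A B1" and p1: "permanent B1 = 0"
    using negrows[of S A] p0 by (simp_all add: B1_def)
  have B1v: "B1 $ r $ c = A $ r $ c * A $ r $ o1" for r c
    using pm_cases[OF pm, of r o1] by (auto simp: B1_def S_def)
  define T where "T = {c. B1 $ o1 $ c = -1}"
  define B2 where "B2 = (\<chi> r c. if c \<in> T then - B1$r$c else B1$r$c)"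
  have e2: "pm_equiv B1 B2" and p2: "permanent B2 = 0"
    using negcols[of T B1] p1 by (simp_all add: B2_def)
  have pmB1: "B1 $ r $ c = 1 \<or> B1 $ r $ c = -1" for r c
    using pm_cases[OF pm, of r c] pm_cases[OF pm, of r o1] by (auto simp: B1v)
  have B2v: "B2 $ r $ c = B1 $ r $ c * B1 $ o1 $ c" for r c
    using pmB1[of o1 c] by (auto simp: B2_def T_def)
  have pmB2: "B2 $ r $ c = 1 \<or> B2 $ r $ c = -1" for r c
    using pmB1[of r c] pmB1[of o1 c] by (auto simp: B2v)
  have row0: "B2 $ o1 $ c = 1" for c
    using pmB1[of o1 c] by (auto simp: B2v)
  have col0: "B2 $ r $ o1 = 1" for r
    using pm_cases[OF pm, of r o1] pm_cases[OF pm, of o1 o1] by (auto simp: B2v B1v)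
  define c where "c = [B2$ix 1$ix 1, B2$ix 1$ix 2, B2$ix 1$ix 3,
                      B2$ix 2$ix 1, B2$ix 2$ix 2, B2$ix 2$ix 3,
                      B2$ix 3$ix 1, B2$ix 3$ix 2, B2$ix 3$ix 3]"
  have lstB2: "lst B2 = nm c"
    using row0 col0 by (simp add: lst_def mk_def nm_def c_def upt4 o1_def)
  have cs: "c \<in> set (signs 9)"
    unfolding set_signs c_def using pmB2 by auto
  have "permL (nm c) = 0"
    using p2 permanent_mor[of "nm c"] by (simp add: lstB2[symmetric] mor_lst)
  with cs have "c \<in> set (map fst tbl)"
    unfolding checkB[symmetric] by simp
  then obtain ss where sst: "(c, ss) \<in> set tbl" by auto
  with checkA have ok: "list_all okst ss" "apps ss (nm c) \<in> set Ls"
    by (auto simp: list_all_iff)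
  have "pm_equiv B2 (mat_of_rows (apps ss (nm c)))"
    using apps_equiv[OF ok(1), of "nm c"] by (simp add: lstB2[symmetric] mor_lst)
  with e1 e2 ok(2) show ?thesis
    unfolding pm_equiv_def by (meson rtranclp_trans)
qed

theorem theorem3p6:
  shows "(\<forall>A. pm_matrix A \<and> permanent A = 0 \<longrightarrow>
            (\<exists>!S. S \<in> {Sigma1, transpose Sigma1, Sigma2, transpose Sigma2, Sigma3} \<and> pm_equiv A S))
       \<and> (\<forall>S\<in>{Sigma1, transpose Sigma1, Sigma2, transpose Sigma2, Sigma3}.
            pm_matrix S \<and> permanent S = 0)
       \<and> distinct [Sigma1, transpose Sigma1, Sigma2, transpose Sigma2, Sigma3]
       \<and> (\<forall>S\<in>{Sigma1, transpose Sigma1, Sigma2, transpose Sigma2, Sigma3}.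
            \<forall>T\<in>{Sigma1, transpose Sigma1, Sigma2, transpose Sigma2, Sigma3}.
              pm_equiv S T \<longrightarrow> S = T)"
proof (intro conjI allI impI ballI)
  fix A assume a: "pm_matrix A \<and> permanent A = 0"
  then obtain L where L: "L \<in> set Ls" "pm_equiv A (mat_of_rows L)"
    using exists_L by blast
  show "\<exists>!S. S \<in> {Sigma1, transpose Sigma1, Sigma2, transpose Sigma2, Sigma3} \<and> pm_equiv A S"
  proof (rule ex1I[of _ "mat_of_rows L"])
    show "mat_of_rows L \<in> {Sigma1, transpose Sigma1, Sigma2, transpose Sigma2, Sigma3} \<and>
          pm_equiv A (mat_of_rows L)"
      using L by (simp add: F_eq)
  next
    fix S assume S: "S \<in> {Sigma1, transpose Sigma1, Sigma2, transpose Sigma2, Sigma3} \<and> pm_equiv A S"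
    have "R4 S = R4 (mat_of_rows L) \<and> C4 S = C4 (mat_of_rows L)"
      using inv_equiv[of A S] inv_equiv[of A "mat_of_rows L"] S L by simp
    then show "S = mat_of_rows L"
      using uniq5[of S "mat_of_rows L"] S L(1) by (simp add: F_eq)
  qed
next
  fix S assume "S \<in> {Sigma1, transpose Sigma1, Sigma2, transpose Sigma2, Sigma3}"
  then show "pm_matrix S" "permanent S = 0" using five_ok by auto
next
  show "distinct [Sigma1, transpose Sigma1, Sigma2, transpose Sigma2, Sigma3]" by (rule distinct5)
next
  fix S T assume "S \<in> {Sigma1, transpose Sigma1, Sigma2, transpose Sigma2, Sigma3}"
    "T \<in> {Sigma1, transpose Sigma1, Sigma2, transpose Sigma2, Sigma3}" "pm_equiv S T"
  then show "S = T" using inv_equiv[of S T] uniq5 by blast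
qed

end
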